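(* For every integer $t\ge 2$ and every $\varepsilon>0$ the following holds for infinitely many $k$. There exist a vertex set $V$ containing a terminal set $K$ with $|K|=k$ and $k=o(|V|)$, and a family $\mathcal G$ of unweighted undirected graphs on vertex set $V$, each with $O(|V|)$ edges, such that any data structure (i.e., any encoding map $f$ from $\mathcal G$ to bit strings together with a decoding procedure that, given only $f(G)$, outputs for every pair $x,x'\in K$ an estimate $\delta(x,x')$) which satisfies either $d_G(x,x')\le \delta(x,x')\le (t-\varepsilon)\,d_G(x,x')$ for all $x,x'\in K$ and all $G\in\mathcal G$, or $d_G(x,x')\le \delta(x,x')\le d_G(x,x')+2t-3$ for all $x,x'\in K$ and all $G\in\mathcal G$, must use $\Omega(k^{1+1/(t-1)})$ bits on some $G\in\mathcal G$.
   Context: $d_G(x,x')$ denotes the shortest-path (hop) distance between $x$ and $x'$ in the unweighted graph $G$. *)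

theory Defs
  imports "HOL-Analysis.Analysis" "HOL-Library.Extended_Real"
begin

definition graph_on :: "'a set \<Rightarrow> 'a set set \<Rightarrow> bool" where
  "graph_on V E \<longleftrightarrow> (\<forall>e\<in>E. \<exists>u v. e = {u, v} \<and> u \<noteq> v \<and> u \<in> V \<and> v \<in> V)"

definition walk :: "'a set set \<Rightarrow> 'a list \<Rightarrow> bool" where
  "walk E xs \<longleftrightarrow> xs \<noteq> [] \<and> (\<forall>i. i + 1 < length xs \<longrightarrow> {xs ! i, xs ! (i + 1)} \<in> E)"

text \<open>Hop distance d_G(x,y); it is \<infinity> if y is not reachable from x.\<close>
definition hop_dist :: "'a set set \<Rightarrow> 'a \<Rightarrow> 'a \<Rightarrow> ereal" where
  "hop_dist E x y = Inf {ereal (real (length xs - 1)) | xs. walk E xs \<and> hd xs = x \<and> last xs = y}"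

end

theory Submission
  imports Defs
begin


lemma walk_snocD:
  assumes "walk E (V @ [z])" "V \<noteq> []"
  shows "walk E V \<and> {last V, z} \<in> E"
proof -
  have h: "\<And>i. i + 1 < length V + 1 \<Longrightarrow> {(V@[z]) ! i, (V@[z]) ! (i + 1)} \<in> E"
    using assms(1) unfolding walk_def by auto
  have "walk E V" unfolding walk_def
  proof (intro conjI allI impI)
    fix i assume "i + 1 < length V"
    with h[of i] show "{V ! i, V ! (i + 1)} \<in> E" by (simp add: nth_append)
  qed (use assms in auto)
  moreover have "{last V, z} \<in> E"
    using h[of "length V - 1"] assms(2) by (simp add: nth_append last_conv_nth)
  ultimately show ?thesis by blast
qed

lemma walk_snoc:
  assumes "walk E V" "{last V, z} \<in> E"
  shows "walk E (V @ [z])"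
  unfolding walk_def
proof (intro conjI allI impI)
  fix i assume i: "i + 1 < length (V @ [z])"
  have ne: "V \<noteq> []" using assms walk_def by auto
  show "{(V@[z]) ! i, (V@[z]) ! (i + 1)} \<in> E"
  proof (cases "i + 1 < length V")
    case True thus ?thesis using assms(1) unfolding walk_def by (simp add: nth_append)
  next
    case False
    hence "i = length V - 1" using i by simp
    thus ?thesis using assms(2) ne by (simp add: nth_append last_conv_nth)
  qed
qed simp

lemma walk_Cons:
  assumes "walk E V" "{z, hd V} \<in> E"
  shows "walk E (z # V)"
  unfolding walk_def
proof (intro conjI allI impI)
  fix i assume i: "i + 1 < length (z # V)"
  have ne: "V \<noteq> []" using assms walk_def by auto
  show "{(z # V) ! i, (z # V) ! (i + 1)} \<in> E"
  proof (cases i)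
    case 0 thus ?thesis using assms(2) ne by (simp add: hd_conv_nth)
  next
    case (Suc j) thus ?thesis using assms(1) i unfolding walk_def by simp
  qed
qed simp

lemma walk_mono: "walk E W \<Longrightarrow> E \<subseteq> E' \<Longrightarrow> walk E' W"
  unfolding walk_def by blast

lemma hop_le_walk:
  "walk E xs \<Longrightarrow> hd xs = x \<Longrightarrow> last xs = y \<Longrightarrow> hop_dist E x y \<le> ereal (real (length xs - 1))"
  unfolding hop_dist_def by (rule Inf_lower) blast

lemma hop_nonneg: "0 \<le> hop_dist E x y"
  unfolding hop_dist_def by (rule Inf_greatest) auto

lemma hop_self: "hop_dist E x x = 0"
proof -
  have "walk E [x]" by (simp add: walk_def)
  from hop_le_walk[OF this] have "hop_dist E x x \<le> ereal 0" by simp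
  thus ?thesis using hop_nonneg[of E x x] by (metis antisym zero_ereal_def)
qed

lemma hop_edge: "{x, y} \<in> E \<Longrightarrow> hop_dist E x y \<le> 1"
proof -
  assume "{x, y} \<in> E"
  hence "walk E [x, y]" by (simp add: walk_def)
  from hop_le_walk[OF this] show ?thesis by (simp add: one_ereal_def)
qed

lemma hop_nowalk: "\<not> (\<exists>W. walk E W \<and> hd W = x \<and> last W = y) \<Longrightarrow> hop_dist E x y = \<infinity>"
  unfolding hop_dist_def by (auto simp: top_ereal_def[symmetric])

lemma hop_attain:
  assumes "walk E W" "hd W = x" "last W = y"
  shows "\<exists>W'. walk E W' \<and> hd W' = x \<and> last W' = y \<and> hop_dist E x y = ereal (real (length W' - 1))"
proof -
  define P where "P n = (\<exists>W. walk E W \<and> hd W = x \<and> last W = y \<and> length W - 1 = n)" for n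
  have "P (length W - 1)" using assms P_def by blast
  hence "P (LEAST n. P n)" by (rule LeastI)
  then obtain W' where W': "walk E W'" "hd W' = x" "last W' = y" "length W' - 1 = (LEAST n. P n)"
    unfolding P_def by blast
  have "hop_dist E x y \<le> ereal (real (length W' - 1))" by (rule hop_le_walk) (use W' in auto)
  moreover have "ereal (real (length W' - 1)) \<le> hop_dist E x y"
    unfolding hop_dist_def
  proof (rule Inf_greatest, clarify)
    fix xs assume "walk E xs" "x = hd xs" "y = last xs"
    hence "P (length xs - 1)" unfolding P_def by blast
    hence "(LEAST n. P n) \<le> length xs - 1" by (rule Least_le)
    thus "ereal (real (length W' - 1)) \<le> ereal (real (length xs - 1))" using W' by simp
  qed
  ultimately show ?thesis using W' by (intro exI[of _ W']) auto
qed

lemma hop_finite_attain: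
  assumes "hop_dist E x y \<noteq> \<infinity>"
  shows "\<exists>W'. walk E W' \<and> hd W' = x \<and> last W' = y \<and> hop_dist E x y = ereal (real (length W' - 1))"
  using hop_attain hop_nowalk assms by metis

lemma len_aux: "W \<noteq> [] \<Longrightarrow> real (length W - Suc 0) + 1 = real (length W)"
  by (cases W) auto

lemma walk_potential:
  assumes "walk E W" "\<forall>p q. {p, q} \<in> E \<longrightarrow> h q \<le> h p + (1::ereal)"
  shows "h (last W) \<le> h (hd W) + ereal (real (length W - 1))"
  using assms(1)
proof (induction W rule: rev_induct)
  case Nil thus ?case by (simp add: walk_def)
next
  case (snoc z V)
  show ?case
  proof (cases "V = []")
    case True thus ?thesis by simp
  next
    case False
    from walk_snocD[OF snoc.prems False] have V: "walk E V" "{last V, z} \<in> E" by auto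
    have "h z \<le> h (last V) + 1" using assms(2) V(2) by blast
    also have "\<dots> \<le> h (hd V) + ereal (real (length V - 1)) + 1"
      using snoc.IH[OF V(1)] by (simp add: add_right_mono)
    also have "\<dots> = h (hd V) + ereal (real (length (V @ [z]) - 1))"
      using False by (simp add: add.assoc one_ereal_def len_aux)
    finally show ?thesis using False by simp
  qed
qed

lemma hop_potential:
  assumes "\<forall>p q. {p, q} \<in> E \<longrightarrow> h q \<le> h p + (1::ereal)" "\<forall>z. 0 \<le> h z"
  shows "h y \<le> h x + hop_dist E x y"
proof (cases "hop_dist E x y = \<infinity>")
  case True
  have "h x \<noteq> -\<infinity>" using assms(2)[rule_format, of x] by auto
  hence eq: "h x + hop_dist E x y = \<infinity>" using True by simp
  show ?thesis unfolding eq by (rule ereal_less_eq(1))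
next
  case False
  then obtain W where W: "walk E W" "hd W = x" "last W = y" "hop_dist E x y = ereal (real (length W - 1))"
    using hop_finite_attain[OF False] by blast
  have "h (last W) \<le> h (hd W) + ereal (real (length W - 1))" by (rule walk_potential[OF W(1) assms(1)])
  thus ?thesis unfolding W(2,3) W(4)[symmetric] .
qed

lemma hop_step: "{p, q} \<in> E \<Longrightarrow> hop_dist E x q \<le> hop_dist E x p + 1"
proof (cases "hop_dist E x p = \<infinity>")
  case True thus ?thesis by simp
next
  case False
  assume e: "{p, q} \<in> E"
  obtain W where W: "walk E W" "hd W = x" "last W = p" "hop_dist E x p = ereal (real (length W - 1))"
    using hop_finite_attain[OF False] by blast
  have ne: "W \<noteq> []" using W walk_def by auto
  have "walk E (W @ [q])" using walk_snoc[OF W(1)] e W(3) by simp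
  from hop_le_walk[OF this] have "hop_dist E x q \<le> ereal (real (length W))" using W ne by simp
  also have "\<dots> = hop_dist E x p + 1" using W(4) ne by (simp add: one_ereal_def len_aux)
  finally show ?thesis .
qed

lemma hop_step': "{p, q} \<in> E \<Longrightarrow> hop_dist E q x \<le> hop_dist E p x + 1"
proof (cases "hop_dist E p x = \<infinity>")
  case True thus ?thesis by simp
next
  case False
  assume e: "{p, q} \<in> E"
  obtain W where W: "walk E W" "hd W = p" "last W = x" "hop_dist E p x = ereal (real (length W - 1))"
    using hop_finite_attain[OF False] by blast
  have ne: "W \<noteq> []" using W walk_def by auto
  have "{q, hd W} \<in> E" using e W(2) by (metis insert_commute)
  hence w: "walk E (q # W)" using walk_Cons[OF W(1)] by blast
  have "hop_dist E q x \<le> ereal (real (length (q # W) - 1))"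
    apply (rule hop_le_walk[OF w]) using ne W(3) by auto
  also have "\<dots> = hop_dist E p x + 1" using W(4) ne by (simp add: one_ereal_def len_aux)
  finally show ?thesis .
qed

lemma hop_sym_le: "hop_dist E y x \<le> hop_dist E x y"
proof -
  have 1: "\<forall>p q. {p, q} \<in> E \<longrightarrow> hop_dist E q x \<le> hop_dist E p x + 1"
    by (intro allI impI, erule hop_step')
  have 2: "\<forall>z. 0 \<le> hop_dist E z x" by (simp add: hop_nonneg)
  have "hop_dist E y x \<le> hop_dist E x x + hop_dist E x y"
    by (rule hop_potential[where h="\<lambda>z. hop_dist E z x", OF 1 2])
  thus ?thesis by (metis hop_self add.left_neutral)
qed

lemma hop_sym: "hop_dist E y x = hop_dist E x y"
  by (rule antisym) (rule hop_sym_le)+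

lemma hop_triangle: "hop_dist E a y \<le> hop_dist E a b + hop_dist E b y"
proof -
  have 1: "\<forall>p q. {p, q} \<in> E \<longrightarrow> hop_dist E a q \<le> hop_dist E a p + 1"
    by (intro allI impI, erule hop_step)
  have 2: "\<forall>z. 0 \<le> hop_dist E a z" by (simp add: hop_nonneg)
  show ?thesis by (rule hop_potential[where h="\<lambda>z. hop_dist E a z", OF 1 2])
qed

lemma hop_mono: "E \<subseteq> E' \<Longrightarrow> hop_dist E' x y \<le> hop_dist E x y"
  unfolding hop_dist_def by (rule Inf_superset_mono) (auto intro: walk_mono)

lemma hop_less_nat:
  assumes "hop_dist E x y < ereal (real n)"
  shows "\<exists>W. walk E W \<and> hd W = x \<and> last W = y \<and> length W - 1 < n"
proof -
  have "hop_dist E x y \<noteq> \<infinity>" using assms by auto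
  from hop_finite_attain[OF this] obtain W where W: "walk E W" "hd W = x" "last W = y"
    "hop_dist E x y = ereal (real (length W - 1))" by blast
  thus ?thesis using assms by auto
qed



lemma minmin_le:
  fixes X A B C c :: ereal
  shows "X \<le> A + c \<Longrightarrow> X \<le> B + c \<Longrightarrow> X \<le> C + c \<Longrightarrow> X \<le> min A (min B C) + c"
  by (cases "A \<le> B"; cases "A \<le> C"; cases "B \<le> C") (auto simp: min_def)

lemma aux_le1: "0 \<le> (Y::ereal) \<Longrightarrow> X + 1 \<le> X + 1 + Y + 1"
proof -
  assume "0 \<le> Y"
  hence "0 \<le> Y + 1" by (simp add: add_nonneg_nonneg)
  hence "X + 1 \<le> X + 1 + (Y + 1)" by (rule add_increasing2) simp
  thus ?thesis by (simp add: add.assoc)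
qed

lemma aux_le3: "0 \<le> (Y::ereal) \<Longrightarrow> X \<le> X + 1 + Y + 1"
proof -
  assume "0 \<le> Y"
  hence "0 \<le> 1 + Y + 1" by (simp add: add_nonneg_nonneg)
  hence "X \<le> X + (1 + Y + 1)" by (rule add_increasing2) simp
  thus ?thesis by (simp add: add.assoc)
qed

lemma hop_add_edge:
  "min (hop_dist E x y) (min (hop_dist E x a + 1 + hop_dist E b y) (hop_dist E x b + 1 + hop_dist E a y))
     \<le> hop_dist (insert {a, b} E) x y"
proof -
  let ?d = "hop_dist E"
  define h where "h z = min (?d x z) (min (?d x a + 1 + ?d b z) (?d x b + 1 + ?d a z))" for z
  have h0: "\<forall>z. 0 \<le> h z" unfolding h_def by (simp add: hop_nonneg add_nonneg_nonneg)
  have hx: "h x = 0"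
  proof -
    have "h x \<le> ?d x x" unfolding h_def by (simp add: min_le_iff_disj)
    thus ?thesis using h0 hop_self[of E x] by (metis antisym)
  qed
  have lip: "\<forall>p q. {p, q} \<in> insert {a, b} E \<longrightarrow> h q \<le> h p + 1"
  proof (intro allI impI)
    fix p q assume pq: "{p, q} \<in> insert {a, b} E"
    show "h q \<le> h p + 1"
    proof (cases "{p, q} \<in> E")
      case True
      have 1: "?d x q \<le> ?d x p + 1" using hop_step[OF True] .
      have 2: "?d x a + 1 + ?d b q \<le> (?d x a + 1 + ?d b p) + 1"
        using hop_step[OF True, of b] by (metis add.assoc add_left_mono)
      have 3: "?d x b + 1 + ?d a q \<le> (?d x b + 1 + ?d a p) + 1"
        using hop_step[OF True, of a] by (metis add.assoc add_left_mono)
      have "h q \<le> ?d x q" "h q \<le> ?d x a + 1 + ?d b q" "h q \<le> ?d x b + 1 + ?d a q"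
        unfolding h_def by (simp_all add: min_le_iff_disj)
      hence "h q \<le> ?d x p + 1" "h q \<le> (?d x a + 1 + ?d b p) + 1" "h q \<le> (?d x b + 1 + ?d a p) + 1"
        using 1 2 3 by (blast intro: order_trans)+
      thus ?thesis unfolding h_def[of p] by (rule minmin_le)
    next
      case False
      hence "{p, q} = {a, b}" using pq by blast
      hence cs: "(p = a \<and> q = b) \<or> (p = b \<and> q = a)" by (auto simp: doubleton_eq_iff)
      have gen: "h q \<le> h p + 1" if pq': "(p' = a \<and> q' = b) \<or> (p' = b \<and> q' = a)" and
        ee: "p' = p" "q' = q" for p' q'
      proof -
        have hb: "h q \<le> ?d x p + 1"
          using pq' ee unfolding h_def by (auto simp: hop_self min_le_iff_disj)
        have hq: "h q \<le> ?d x q" unfolding h_def by (simp add: min_le_iff_disj)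
        have A: "p = a \<Longrightarrow> ?d x p + 1 \<le> ?d x a + 1 + ?d b p + 1" "p = b \<Longrightarrow> ?d x p + 1 \<le> ?d x b + 1 + ?d a p + 1"
           apply simp apply (rule aux_le1, rule hop_nonneg)
          apply simp apply (rule aux_le1, rule hop_nonneg) done
        have B: "q = a \<Longrightarrow> ?d x q \<le> ?d x a + 1 + ?d b p + 1" "q = b \<Longrightarrow> ?d x q \<le> ?d x b + 1 + ?d a p + 1"
           apply simp apply (rule aux_le3, rule hop_nonneg)
          apply simp apply (rule aux_le3, rule hop_nonneg) done
        show ?thesis unfolding h_def[of p]
        proof (rule minmin_le)
          show "h q \<le> ?d x p + 1" by (rule hb)
          show "h q \<le> ?d x a + 1 + ?d b p + 1"
            using cs proof
            assume "p = a \<and> q = b" thus ?thesis using hb A by (blast intro: order_trans)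
          next
            assume "p = b \<and> q = a" thus ?thesis using hq B by (blast intro: order_trans)
          qed
          show "h q \<le> ?d x b + 1 + ?d a p + 1"
            using cs proof
            assume "p = a \<and> q = b" thus ?thesis using hq B by (blast intro: order_trans)
          next
            assume "p = b \<and> q = a" thus ?thesis using hb A by (blast intro: order_trans)
          qed
        qed
      qed
      show ?thesis using gen cs by blast
    qed
  qed
  have "h y \<le> h x + hop_dist (insert {a, b} E) x y"
    by (rule hop_potential[OF lip h0])
  thus ?thesis using hx unfolding h_def[of y] by simp
qed



definition Pgood :: "nat \<Rightarrow> nat set set \<Rightarrow> bool" where
  "Pgood t H \<longleftrightarrow> (\<forall>a b. {a, b} \<in> H \<longrightarrow> ereal (real t) \<le> hop_dist (H - {{a, b}}) a b)"

definition nb :: "'a set set \<Rightarrow> 'a \<Rightarrow> 'a set" where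
  "nb H z = {w. {z, w} \<in> H}"

lemma graph_onD: "graph_on V H \<Longrightarrow> {z, w} \<in> H \<Longrightarrow> z \<in> V \<and> w \<in> V \<and> z \<noteq> w"
proof -
  assume "graph_on V H" "{z, w} \<in> H"
  then obtain u v where uv: "{z, w} = {u, v}" "u \<noteq> v" "u \<in> V" "v \<in> V" unfolding graph_on_def by blast
  thus ?thesis by (auto simp: doubleton_eq_iff)
qed

lemma graph_on_sub: "graph_on V H \<Longrightarrow> H \<subseteq> Pow V"
proof
  fix e assume "graph_on V H" "e \<in> H"
  then obtain u v where "e = {u, v}" "u \<in> V" "v \<in> V" unfolding graph_on_def by blast
  thus "e \<in> Pow V" by auto
qed

lemma ext_good:
  assumes g: "graph_on {0..<n} H" and P: "Pgood t H" and ab: "{a, b} \<notin> H"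
    and dab: "ereal (real t) \<le> hop_dist H a b"
  shows "Pgood t (insert {a, b} H)"
  unfolding Pgood_def
proof (intro allI impI)
  fix x y assume xy: "{x, y} \<in> insert {a, b} H"
  show "ereal (real t) \<le> hop_dist (insert {a, b} H - {{x, y}}) x y"
  proof (cases "{x, y} = {a, b}")
    case True
    hence eq: "insert {a, b} H - {{x, y}} = H" using ab by auto
    from True have "(x = a \<and> y = b) \<or> (x = b \<and> y = a)" by (auto simp: doubleton_eq_iff)
    thus ?thesis unfolding eq using dab hop_sym[of H a b] by auto
  next
    case False
    hence xyH: "{x, y} \<in> H" using xy by auto
    have eq: "insert {a, b} H - {{x, y}} = insert {a, b} (H - {{x, y}})" using False by auto
    let ?d = "hop_dist (H - {{x, y}})"
    let ?D = "hop_dist H"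
    have sub: "H - {{x, y}} \<subseteq> H" by auto
    have m: "?D p q \<le> ?d p q" for p q by (rule hop_mono[OF sub])
    have e1: "?D x y \<le> 1" by (rule hop_edge[OF xyH])
    have t1: "ereal (real t) \<le> ?d x y" using P xyH unfolding Pgood_def by blast
    have "?D a b \<le> ?D a x + ?D x b" by (rule hop_triangle)
    also have "\<dots> \<le> ?D a x + (?D x y + ?D y b)" by (rule add_left_mono, rule hop_triangle)
    also have "\<dots> \<le> ?d x a + (1 + ?d b y)"
    proof (rule add_mono)
      show "?D a x \<le> ?d x a" by (subst hop_sym) (rule m)
      show "?D x y + ?D y b \<le> 1 + ?d b y" by (rule add_mono[OF e1]) (subst hop_sym, rule m)
    qed
    finally have t2: "ereal (real t) \<le> ?d x a + 1 + ?d b y" using dab by (simp add: add.assoc)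
    have "?D a b = ?D b a" by (rule hop_sym)
    also have "\<dots> \<le> ?D b x + ?D x a" by (rule hop_triangle)
    also have "\<dots> \<le> ?D b x + (?D x y + ?D y a)" by (rule add_left_mono, rule hop_triangle)
    also have "\<dots> \<le> ?d x b + (1 + ?d a y)"
    proof (rule add_mono)
      show "?D b x \<le> ?d x b" by (subst hop_sym) (rule m)
      show "?D x y + ?D y a \<le> 1 + ?d a y" by (rule add_mono[OF e1]) (subst hop_sym, rule m)
    qed
    finally have t3: "ereal (real t) \<le> ?d x b + 1 + ?d a y" using dab by (simp add: add.assoc)
    have "ereal (real t) \<le> min (?d x y) (min (?d x a + 1 + ?d b y) (?d x b + 1 + ?d a y))"
      using t1 t2 t3 by simp
    also have "\<dots> \<le> hop_dist (insert {a, b} (H - {{x, y}})) x y" by (rule hop_add_edge)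
    finally show ?thesis unfolding eq .
  qed
qed

primrec nbhd :: "'a set set \<Rightarrow> 'a \<Rightarrow> nat \<Rightarrow> 'a set" where
  "nbhd E a 0 = {a}"
| "nbhd E a (Suc i) = nbhd E a i \<union> (\<Union>z\<in>nbhd E a i. nb E z)"

lemma nbhd_mono: "i \<le> j \<Longrightarrow> nbhd E a i \<subseteq> nbhd E a j"
  by (induction j) (auto simp: le_Suc_eq)

lemma walk_nbhd: "walk E W \<Longrightarrow> last W \<in> nbhd E (hd W) (length W - 1)"
proof (induction W rule: rev_induct)
  case Nil thus ?case by (simp add: walk_def)
next
  case (snoc z V)
  show ?case
  proof (cases "V = []")
    case True thus ?thesis by simp
  next
    case False
    from walk_snocD[OF snoc.prems False] have V: "walk E V" "{last V, z} \<in> E" by auto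
    have "last V \<in> nbhd E (hd V) (length V - 1)" by (rule snoc.IH[OF V(1)])
    moreover have "length (V @ [z]) - 1 = Suc (length V - 1)" using False by simp
    moreover have "z \<in> nb E (last V)" using V(2) by (simp add: nb_def)
    ultimately have "z \<in> nbhd E (hd V) (Suc (length V - 1))" unfolding nbhd.simps by blast
    thus ?thesis using False by (metis \<open>length (V @ [z]) - 1 = Suc (length V - 1)\<close> hd_append2 last_snoc)
  qed
qed

lemma nbhd_card:
  assumes "\<And>z. finite (nb E z) \<and> card (nb E z) \<le> D"
  shows "finite (nbhd E a i) \<and> card (nbhd E a i) \<le> (D + 1) ^ i"
proof (induction i)
  case 0 thus ?case by simp
next
  case (Suc i)
  let ?B = "nbhd E a i"
  have f: "finite (\<Union>z\<in>?B. nb E z)" using Suc assms by auto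
  have "card (\<Union>z\<in>?B. nb E z) \<le> (\<Sum>z\<in>?B. card (nb E z))" by (rule card_UN_le) (use Suc in auto)
  also have "\<dots> \<le> (\<Sum>z\<in>?B. D)" by (rule sum_mono) (use assms in auto)
  also have "\<dots> = card ?B * D" by simp
  finally have c: "card (\<Union>z\<in>?B. nb E z) \<le> card ?B * D" .
  have "card (nbhd E a (Suc i)) \<le> card ?B + card (\<Union>z\<in>?B. nb E z)"
    by (simp add: card_Un_le)
  also have "\<dots> \<le> card ?B * (D + 1)" using c by simp
  also have "\<dots> \<le> (D + 1) ^ i * (D + 1)" using Suc by (intro mult_right_mono) auto
  finally show ?case using Suc f by (simp add: mult.commute)
qed



lemma nb_sub: "graph_on V H \<Longrightarrow> nb H z \<subseteq> V"
proof
  fix w assume g: "graph_on V H" and "w \<in> nb H z"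
  hence "{z, w} \<in> H" by (simp add: nb_def)
  thus "w \<in> V" using graph_onD[OF g] by blast
qed

lemma nb_insert: "nb (insert {a, b} H) z \<subseteq> (if z = a then insert b (nb H z) else if z = b then insert a (nb H z) else nb H z)"
  unfolding nb_def by (auto simp: doubleton_eq_iff)

lemma pairs_card:
  fixes H :: "nat set set"
  assumes g: "graph_on {0..<n} H"
  shows "card {(z, w). {z, w} \<in> H} \<le> 2 * card H"
proof -
  let ?P = "{(z::nat, w). {z, w} \<in> H}"
  let ?g = "\<lambda>(z::nat, w). ({z, w}, z < w)"
  have fH: "finite H" using graph_on_sub[OF g] by (rule finite_subset) simp
  have inj: "inj_on ?g ?P"
  proof (rule inj_onI, clarify)
    fix z w z' w'
    assume "{z, w} \<in> H" "{z', w'} \<in> H" "{z, w} = {z', w'}" "(z < w) = (z' < w')"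
    moreover have "z \<noteq> w" using graph_onD[OF g \<open>{z, w} \<in> H\<close>] by blast
    ultimately show "z = z' \<and> w = w'" by (auto simp: doubleton_eq_iff)
  qed
  have "?g ` ?P \<subseteq> H \<times> UNIV" by auto
  hence "card (?g ` ?P) \<le> card (H \<times> (UNIV :: bool set))" using fH by (intro card_mono) auto
  also have "\<dots> = 2 * card H" by (simp add: card_cartesian_product mult.commute)
  finally show ?thesis using card_image[OF inj] by simp
qed

lemma exists_H:
  assumes t: "t \<ge> 2" and D: "D \<ge> 1" and n: "n = 2 * (D + 1) ^ (t - 1)"
  shows "\<exists>H. graph_on {0..<n} H \<and> Pgood t H \<and> D * (D + 1) ^ (t - 1) \<le> 2 * card H"
proof -
  define C where "C = {H. graph_on {0..<n} H \<and> (\<forall>z. card (nb H z) \<le> D) \<and> Pgood t H}"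
  have fC: "finite C"
  proof (rule finite_subset)
    show "C \<subseteq> Pow (Pow {0..<n})" unfolding C_def using graph_on_sub by blast
  qed simp
  have "{} \<in> C" unfolding C_def graph_on_def Pgood_def nb_def by simp
  hence ne: "card ` C \<noteq> {}" by blast
  obtain H where HC: "H \<in> C" and Hmax: "card H = Max (card ` C)"
    using Max_in[OF finite_imageI[OF fC] ne] by auto
  have maxH: "card H' \<le> card H" if "H' \<in> C" for H'
    using Hmax Max_ge[OF finite_imageI[OF fC]] that by auto
  have g: "graph_on {0..<n} H" and deg: "\<And>z. card (nb H z) \<le> D" and P: "Pgood t H"
    using HC unfolding C_def by auto
  have fH: "finite H" using graph_on_sub[OF g] by (rule finite_subset) simp
  have fnb: "finite (nb H z)" for z using nb_sub[OF g] by (rule finite_subset) simp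
  define U where "U = {z\<in>{0..<n}. card (nb H z) < D}"
  have close: "{a, b} \<in> H \<or> hop_dist H a b < ereal (real t)"
    if a: "a \<in> U" and b: "b \<in> U" and ab: "a \<noteq> b" for a b
  proof (rule ccontr)
    assume "\<not> ?thesis"
    hence nab: "{a, b} \<notin> H" and dab: "ereal (real t) \<le> hop_dist H a b" by auto
    let ?H' = "insert {a, b} H"
    have g': "graph_on {0..<n} ?H'" using g a b ab unfolding graph_on_def U_def by blast
    have deg': "card (nb ?H' z) \<le> D" for z
    proof -
      have "card (nb ?H' z) \<le> card (if z = a then insert b (nb H z) else if z = b then insert a (nb H z) else nb H z)"
        by (rule card_mono[OF _ nb_insert]) (simp add: fnb)
      also have "\<dots> \<le> D"
        using a b deg[of z] fnb[of z] card_insert_le_m1 unfolding U_def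
        by (auto simp: card_insert_if)
      finally show ?thesis .
    qed
    have P': "Pgood t ?H'" by (rule ext_good[OF g P nab dab])
    have "?H' \<in> C" unfolding C_def using g' deg' P' by blast
    hence "card ?H' \<le> card H" by (rule maxH)
    thus False using nab fH by simp
  qed
  have cardU: "card U \<le> (D + 1) ^ (t - 1)"
  proof (cases "U = {}")
    case True thus ?thesis by simp
  next
    case False
    then obtain a where a: "a \<in> U" by blast
    have "U \<subseteq> nbhd H a (t - 1)"
    proof
      fix b assume b: "b \<in> U"
      show "b \<in> nbhd H a (t - 1)"
      proof (cases "b = a")
        case True thus ?thesis using nbhd_mono[of 0 "t - 1" H a] by auto
      next
        case False
        from close[OF a b False[symmetric]] show ?thesis
        proof
          assume "{a, b} \<in> H"
          hence "walk H [a, b]" by (simp add: walk_def)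
          from walk_nbhd[OF this] have "b \<in> nbhd H a 1" by simp
          moreover have "(1::nat) \<le> t - 1" using t by simp
          ultimately show ?thesis using nbhd_mono[of 1 "t - 1" H a] by blast
        next
          assume "hop_dist H a b < ereal (real t)"
          from hop_less_nat[OF this] obtain W where W: "walk H W" "hd W = a" "last W = b" "length W - 1 < t"
            by blast
          from walk_nbhd[OF W(1)] W have "b \<in> nbhd H a (length W - 1)" by simp
          moreover have "length W - 1 \<le> t - 1" using W(4) by simp
          ultimately show ?thesis using nbhd_mono[of "length W - 1" "t - 1" H a] by blast
        qed
      qed
    qed
    moreover have "finite (nbhd H a (t - 1)) \<and> card (nbhd H a (t - 1)) \<le> (D + 1) ^ (t - 1)"
      by (rule nbhd_card) (use fnb deg in auto)
    ultimately show ?thesis by (meson card_mono le_trans)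
  qed
  define S where "S = {0..<n} - U"
  have fU: "finite U" unfolding U_def by simp
  have "card S = n - card U" unfolding S_def
    by (subst card_Diff_subset) (auto simp: U_def fU)
  hence cS: "(D + 1) ^ (t - 1) \<le> card S" using cardU n by simp
  have degS: "card (nb H z) = D" if "z \<in> S" for z using deg[of z] that unfolding S_def U_def by auto
  have "card (Sigma S (nb H)) = (\<Sum>z\<in>S. card (nb H z))"
    by (rule card_SigmaI) (auto simp: S_def fnb)
  also have "\<dots> = card S * D" using degS by simp
  finally have cSig: "card (Sigma S (nb H)) = card S * D" .
  have "Sigma S (nb H) \<subseteq> {(z, w). {z, w} \<in> H}" unfolding nb_def by auto
  moreover have "finite {(z, w). {z, w} \<in> H}"
  proof (rule finite_subset)
    show "{(z, w). {z, w} \<in> H} \<subseteq> {0..<n} \<times> {0..<n}" using graph_onD[OF g] by auto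
  qed simp
  ultimately have "card (Sigma S (nb H)) \<le> card {(z, w). {z, w} \<in> H}" by (rule card_mono[rotated])
  also have "\<dots> \<le> 2 * card H" by (rule pairs_card[OF g])
  finally have "card S * D \<le> 2 * card H" using cSig by simp
  moreover have "D * (D + 1) ^ (t - 1) \<le> card S * D" using mult_right_mono[OF cS, of D] by (simp add: mult.commute)
  ultimately have "D * (D + 1) ^ (t - 1) \<le> 2 * card H" by linarith
  thus ?thesis using g P by blast
qed



definition sv :: "nat \<Rightarrow> nat \<Rightarrow> nat \<Rightarrow> nat" where
  "sv k u v = k + u * k + v"

definition sub :: "nat \<Rightarrow> nat set set \<Rightarrow> nat set set" where
  "sub k G = {{u, sv k u v} | u v. {u, v} \<in> G \<and> u < v} \<union> {{sv k u v, v} | u v. {u, v} \<in> G \<and> u < v}"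

lemma sv_decode:
  assumes "b < k"
  shows "k \<le> sv k a b" "(sv k a b - k) div k = a" "(sv k a b - k) mod k = b"
  using assms by (auto simp: sv_def)

lemma sub_memD:
  assumes "{p, q} \<in> sub k G"
  shows "\<exists>a b. {a, b} \<in> G \<and> a < b \<and> ({p, q} = {a, sv k a b} \<or> {p, q} = {sv k a b, b})"
  using assms unfolding sub_def by blast

lemma sub_upper:
  assumes "{u, v} \<in> G" "u \<noteq> v"
  shows "hop_dist (sub k G) u v \<le> 2"
proof -
  have "\<exists>s. {u, s} \<in> sub k G \<and> {s, v} \<in> sub k G"
  proof (cases "u < v")
    case True
    have "{u, sv k u v} \<in> sub k G" "{sv k u v, v} \<in> sub k G"
      unfolding sub_def using assms True by blast+
    thus ?thesis by blast
  next
    case False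
    hence vu: "v < u" using assms by simp
    have G': "{v, u} \<in> G" using assms by (simp add: insert_commute)
    have "{v, sv k v u} \<in> sub k G" "{sv k v u, u} \<in> sub k G"
      unfolding sub_def using G' vu by blast+
    hence "{u, sv k v u} \<in> sub k G" "{sv k v u, v} \<in> sub k G" by (simp_all add: insert_commute)
    thus ?thesis by blast
  qed
  then obtain s where s: "{u, s} \<in> sub k G" "{s, v} \<in> sub k G" by blast
  have "walk (sub k G) [u, s, v]" unfolding walk_def
  proof (intro conjI allI impI)
    fix i assume "i + 1 < length [u, s, v]"
    hence "i = 0 \<or> i = 1" by auto
    thus "{[u, s, v] ! i, [u, s, v] ! (i + 1)} \<in> sub k G" using s by auto
  qed simp
  from hop_le_walk[OF this] have "hop_dist (sub k G) u v \<le> ereal 2" by simp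
  thus ?thesis by (simp add: numeral_eq_ereal)
qed

lemma min2_le: "(X::ereal) \<le> A + c \<Longrightarrow> X \<le> B + c \<Longrightarrow> X \<le> min A B + c"
  by (cases "A \<le> B") (auto simp: min_def)

lemma le_plus1: "(X::ereal) \<le> X + 1"
  by (rule add_increasing2) auto

lemma aux_a: "(m::ereal) \<le> X \<Longrightarrow> m + m + 1 \<le> X + X + 1"
  by (intro add_mono) auto

lemma aux_b: "(X::ereal) \<le> m + 1 \<Longrightarrow> X + X \<le> m + m + 1 + 1"
proof -
  assume "X \<le> m + 1"
  hence "X + X \<le> (m + 1) + (m + 1)" using add_mono by blast
  thus ?thesis by (simp add: ac_simps)
qed

lemma sub_lower:
  assumes g: "graph_on {0..<k} G" and u: "u < k" and y: "y < k"
  shows "hop_dist G u y + hop_dist G u y \<le> hop_dist (sub k G) u y"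
proof -
  let ?d = "hop_dist G u"
  define h where "h z = (if z < k then ?d z + ?d z else
      min (?d ((z - k) div k)) (?d ((z - k) mod k)) + min (?d ((z - k) div k)) (?d ((z - k) mod k)) + 1)" for z
  have h0: "\<forall>z. 0 \<le> h z" unfolding h_def by (simp add: hop_nonneg add_nonneg_nonneg)
  have hu: "h u = 0" using u unfolding h_def by (simp add: hop_self)
  have lip: "\<forall>p q. {p, q} \<in> sub k G \<longrightarrow> h q \<le> h p + 1"
  proof (intro allI impI)
    fix p q assume "{p, q} \<in> sub k G"
    from sub_memD[OF this] obtain a b where ab: "{a, b} \<in> G" "a < b"
      and pq: "{p, q} = {a, sv k a b} \<or> {p, q} = {sv k a b, b}" by blast
    have bk: "b < k" using graph_onD[OF g ab(1)] by simp
    have ak: "a < k" using graph_onD[OF g ab(1)] by simp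
    let ?s = "sv k a b"
    let ?m = "min (?d a) (?d b)"
    have hs: "h ?s = ?m + ?m + 1" using sv_decode[OF bk, of a] unfolding h_def by auto
    have ha: "h a = ?d a + ?d a" using ak unfolding h_def by simp
    have hb: "h b = ?d b + ?d b" using bk unfolding h_def by simp
    have ab1: "?d a \<le> ?d b + 1" using hop_step[of b a G u] ab(1) by (simp add: insert_commute)
    have ba1: "?d b \<le> ?d a + 1" using hop_step[of a b G u] ab(1) by simp
    have ma: "?d a \<le> ?m + 1" using ab1 le_plus1 by (rule_tac min2_le)
    have mb: "?d b \<le> ?m + 1" using ba1 le_plus1 by (rule_tac min2_le)
    from pq show "h q \<le> h p + 1"
    proof
      assume "{p, q} = {a, ?s}"
      hence "(p = a \<and> q = ?s) \<or> (p = ?s \<and> q = a)" by (auto simp: doubleton_eq_iff)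
      thus ?thesis
      proof
        assume "p = a \<and> q = ?s"
        thus ?thesis using hs ha aux_a[of ?m "?d a"] by simp
      next
        assume "p = ?s \<and> q = a"
        thus ?thesis using hs ha aux_b[OF ma] by simp
      qed
    next
      assume "{p, q} = {?s, b}"
      hence "(p = b \<and> q = ?s) \<or> (p = ?s \<and> q = b)" by (auto simp: doubleton_eq_iff)
      thus ?thesis
      proof
        assume "p = b \<and> q = ?s"
        thus ?thesis using hs hb aux_a[of ?m "?d b"] by simp
      next
        assume "p = ?s \<and> q = b"
        thus ?thesis using hs hb aux_b[OF mb] by simp
      qed
    qed
  qed
  have "h y \<le> h u + hop_dist (sub k G) u y" by (rule hop_potential[OF lip h0])
  thus ?thesis using hu y unfolding h_def[of y] by simp
qed



lemma distinguish:
  assumes g: "graph_on {0..<k} H" and P: "Pgood t H" and G: "G \<subseteq> H" and G': "G' \<subseteq> H"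
    and e: "{u, v} \<in> G'" "{u, v} \<notin> G"
  shows "hop_dist (sub k G') u v \<le> 2" "ereal (2 * real t) \<le> hop_dist (sub k G) u v"
    "u < k" "v < k"
proof -
  have eH: "{u, v} \<in> H" using e G' by blast
  from graph_onD[OF g eH] have uv: "u < k" "v < k" "u \<noteq> v" by auto
  show "hop_dist (sub k G') u v \<le> 2" using sub_upper[OF e(1) uv(3)] .
  have gG: "graph_on {0..<k} G" using g G unfolding graph_on_def by blast
  have "ereal (real t) \<le> hop_dist (H - {{u, v}}) u v" using P eH unfolding Pgood_def by blast
  also have "\<dots> \<le> hop_dist G u v" by (rule hop_mono) (use G e in blast)
  finally have t: "ereal (real t) \<le> hop_dist G u v" .
  have "ereal (2 * real t) = ereal (real t) + ereal (real t)" by simp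
  also have "\<dots> \<le> hop_dist G u v + hop_dist G u v" using t by (intro add_mono)
  also have "\<dots> \<le> hop_dist (sub k G) u v" by (rule sub_lower[OF gG uv(1,2)])
  finally show "ereal (2 * real t) \<le> hop_dist (sub k G) u v" .
  show "u < k" "v < k" using uv by auto
qed

lemma short_lists: "finite {xs :: bool list. length xs < L} \<and> card {xs :: bool list. length xs < L} < 2 ^ L"
proof (induction L)
  case 0 thus ?case by simp
next
  case (Suc L)
  have eq: "{xs :: bool list. length xs < Suc L} = {xs. length xs < L} \<union> {xs. set xs \<subseteq> UNIV \<and> length xs = L}"
    by auto
  have f2: "finite {xs :: bool list. set xs \<subseteq> UNIV \<and> length xs = L}" by (rule finite_lists_length_eq) simp
  have c2: "card {xs :: bool list. set xs \<subseteq> UNIV \<and> length xs = L} = 2 ^ L"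
    by (subst card_lists_length_eq) auto
  have "card {xs :: bool list. length xs < Suc L} \<le> card {xs :: bool list. length xs < L} + 2 ^ L"
    unfolding eq c2[symmetric] by (rule card_Un_le)
  thus ?case using Suc f2 eq by auto
qed

lemma sub_graph:
  assumes g: "graph_on {0..<k} G"
  shows "graph_on {0..<k + k * k} (sub k G)"
  unfolding graph_on_def
proof
  fix e assume "e \<in> sub k G"
  then obtain a b where ab: "{a, b} \<in> G" "a < b" and e: "e = {a, sv k a b} \<or> e = {sv k a b, b}"
    unfolding sub_def by blast
  have ak: "a < k" and bk: "b < k" using graph_onD[OF g ab(1)] by auto
  have "(a + 1) * k \<le> k * k" using ak by (intro mult_right_mono) auto
  hence "a * k + k \<le> k * k" by simp
  hence "a * k + b < k * k" using bk by linarith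
  hence s: "sv k a b < k + k * k" "k \<le> sv k a b" unfolding sv_def by auto
  show "\<exists>u v. e = {u, v} \<and> u \<noteq> v \<and> u \<in> {0..<k + k * k} \<and> v \<in> {0..<k + k * k}"
    using e
  proof
    assume "e = {a, sv k a b}"
    thus ?thesis using s ak by (intro exI[of _ a] exI[of _ "sv k a b"]) auto
  next
    assume "e = {sv k a b, b}"
    thus ?thesis using s bk by (intro exI[of _ "sv k a b"] exI[of _ b]) auto
  qed
qed

lemma sub_card:
  assumes g: "graph_on {0..<k} G"
  shows "card (sub k G) \<le> 2 * (k * k)"
proof -
  define Q where "Q = {(u, v). {u, v} \<in> G \<and> u < v}"
  have Qs: "Q \<subseteq> {0..<k} \<times> {0..<k}" unfolding Q_def using graph_onD[OF g] by auto
  hence fQ: "finite Q" by (rule finite_subset) simp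
  have cQ: "card Q \<le> k * k" using card_mono[OF _ Qs] by simp
  have eq: "sub k G = (\<lambda>(u, v). {u, sv k u v}) ` Q \<union> (\<lambda>(u, v). {sv k u v, v}) ` Q"
    unfolding sub_def Q_def by auto
  have "card (sub k G) \<le> card ((\<lambda>(u, v). {u, sv k u v}) ` Q) + card ((\<lambda>(u, v). {sv k u v, v}) ` Q)"
    unfolding eq by (rule card_Un_le)
  also have "\<dots> \<le> card Q + card Q" by (intro add_mono card_image_le fQ)
  finally show ?thesis using cQ by simp
qed



lemma size_bound:
  assumes t: "t \<ge> 2" and D: "D \<ge> 1" and k: "k = 2 * (D + 1) ^ (t - 1)"
    and H: "D * (D + 1) ^ (t - 1) \<le> 2 * card H"
  shows "real k powr (1 + 1 / (real t - 1)) / 16 \<le> real (card H)"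
proof -
  define x where "x = real (D + 1)"
  define n1 where "n1 = t - 1"
  have x2: "x \<ge> 2" using D unfolding x_def by simp
  have n1: "real n1 = real t - 1" "n1 \<ge> 1" using t unfolding n1_def by auto
  have rk: "real k = 2 * x ^ n1" unfolding k x_def n1_def by simp
  have kpos: "real k > 0" using rk x2 by simp
  have "real k powr (1 + 1 / (real t - 1)) = real k * real k powr (1 / (real t - 1))"
    using kpos by (simp add: powr_add)
  also have "real k powr (1 / (real t - 1)) = 2 powr (1 / (real t - 1)) * (x ^ n1) powr (1 / real n1)"
    unfolding rk n1(1) using x2 by (simp add: powr_mult)
  also have "(x ^ n1) powr (1 / real n1) = x"
  proof -
    have "(x ^ n1) powr (1 / real n1) = (x powr real n1) powr (1 / real n1)"
      using x2 by (simp add: powr_realpow)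
    also have "\<dots> = x powr (real n1 * (1 / real n1))" by (simp add: powr_powr)
    also have "\<dots> = x" using n1(2) x2 by simp
    finally show ?thesis .
  qed
  also have "2 powr (1 / (real t - 1)) \<le> 2 powr 1"
    using t by (intro powr_mono) auto
  hence "2 powr (1 / (real t - 1)) \<le> 2" by simp
  hence "real k * (2 powr (1 / (real t - 1)) * x) \<le> real k * (2 * x)"
    using kpos x2 by (intro mult_left_mono mult_right_mono) auto
  finally have A: "real k powr (1 + 1 / (real t - 1)) \<le> 4 * x ^ (n1 + 1)"
    unfolding rk by (simp add: algebra_simps)
  have "real (D * (D + 1) ^ (t - 1)) \<le> 2 * real (card H)" using H by linarith
  hence B: "real D * x ^ n1 \<le> 2 * real (card H)" unfolding x_def n1_def by simp
  have "x ^ (n1 + 1) = x * x ^ n1" by simp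
  also have "\<dots> \<le> (2 * real D) * x ^ n1" using D x2 unfolding x_def by (intro mult_right_mono) auto
  finally have "x ^ (n1 + 1) \<le> 4 * real (card H)" using B by linarith
  thus ?thesis using A by linarith
qed

lemma encode_lb:
  fixes f :: "nat set set \<Rightarrow> bool list" and dec :: "bool list \<Rightarrow> nat \<Rightarrow> nat \<Rightarrow> ereal" and \<epsilon> :: real
  assumes g: "graph_on {0..<k} H" and P: "Pgood t H" and t: "t \<ge> 2" and eps: "\<epsilon> > 0"
    and hyp: "(\<forall>G\<in>sub k ` Pow H. \<forall>x\<in>{0..<k}. \<forall>x'\<in>{0..<k}.
                 hop_dist G x x' \<le> dec (f G) x x' \<and>
                 dec (f G) x x' \<le> ereal (real t - \<epsilon>) * hop_dist G x x')
              \<or>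
              (\<forall>G\<in>sub k ` Pow H. \<forall>x\<in>{0..<k}. \<forall>x'\<in>{0..<k}.
                 hop_dist G x x' \<le> dec (f G) x x' \<and>
                 dec (f G) x x' \<le> hop_dist G x x' + ereal (2 * real t - 3))"
  shows "\<exists>G\<in>sub k ` Pow H. real (card H) \<le> real (length (f G))"
proof -
  have key: "f (sub k G) \<noteq> f (sub k G')"
    if G: "G \<subseteq> H" and G': "G' \<subseteq> H" and e: "{u, v} \<in> G'" "{u, v} \<notin> G" for G G' u v
  proof
    assume eq: "f (sub k G) = f (sub k G')"
    note ds = distinguish[OF g P G G' e]
    have inG: "sub k G \<in> sub k ` Pow H" and inG': "sub k G' \<in> sub k ` Pow H" using G G' by auto
    have uk: "u \<in> {0..<k}" "v \<in> {0..<k}" using ds by auto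
    let ?d1 = "hop_dist (sub k G') u v"
    let ?d0 = "hop_dist (sub k G) u v"
    let ?\<delta> = "dec (f (sub k G)) u v"
    obtain r where r: "?d1 = ereal r" "0 \<le> r" "r \<le> 2"
      using ds(1) hop_nonneg[of "sub k G'" u v] by (cases ?d1) auto
    have d0: "ereal (2 * real t) \<le> ?\<delta>"
    proof -
      have "?d0 \<le> ?\<delta>" using hyp inG uk by blast
      thus ?thesis using ds(2) by (rule order_trans[rotated])
    qed
    from hyp show False
    proof
      assume h1: "\<forall>G\<in>sub k ` Pow H. \<forall>x\<in>{0..<k}. \<forall>x'\<in>{0..<k}.
                 hop_dist G x x' \<le> dec (f G) x x' \<and>
                 dec (f G) x x' \<le> ereal (real t - \<epsilon>) * hop_dist G x x'"
      have "dec (f (sub k G')) u v \<le> ereal (real t - \<epsilon>) * ?d1" using h1 inG' uk by blast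
      hence "?\<delta> \<le> ereal ((real t - \<epsilon>) * r)" using eq r(1) by simp
      hence le: "2 * real t \<le> (real t - \<epsilon>) * r" using d0 by (metis ereal_less_eq(3) order_trans)
      have "(real t - \<epsilon>) * r < 2 * real t"
      proof (cases "r = 0")
        case True thus ?thesis using t by simp
      next
        case False
        hence "\<epsilon> * r > 0" using r eps by simp
        moreover have "real t * r \<le> real t * 2" using r by (intro mult_left_mono) auto
        ultimately show ?thesis by (simp add: algebra_simps)
      qed
      thus False using le by simp
    next
      assume h2: "\<forall>G\<in>sub k ` Pow H. \<forall>x\<in>{0..<k}. \<forall>x'\<in>{0..<k}.
                 hop_dist G x x' \<le> dec (f G) x x' \<and>
                 dec (f G) x x' \<le> hop_dist G x x' + ereal (2 * real t - 3)"
      have "dec (f (sub k G')) u v \<le> ?d1 + ereal (2 * real t - 3)" using h2 inG' uk by blast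
      hence "?\<delta> \<le> ereal (r + (2 * real t - 3))" using eq r(1) by simp
      hence le: "2 * real t \<le> r + (2 * real t - 3)" using d0 by (metis ereal_less_eq(3) order_trans)
      thus False using r by simp
    qed
  qed
  have inj: "inj_on (\<lambda>G. f (sub k G)) (Pow H)"
  proof (rule inj_onI, rule ccontr)
    fix G G' assume G: "G \<in> Pow H" and G': "G' \<in> Pow H" and eq: "f (sub k G) = f (sub k G')"
      and ne: "G \<noteq> G'"
    from ne have "(\<exists>e. e \<in> G' \<and> e \<notin> G) \<or> (\<exists>e. e \<in> G \<and> e \<notin> G')" by blast
    thus False
    proof
      assume "\<exists>e. e \<in> G' \<and> e \<notin> G"
      then obtain e where e: "e \<in> G'" "e \<notin> G" by blast
      then obtain u v where "e = {u, v}" using G' g unfolding graph_on_def by blast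
      thus False using key[of G G' u v] G G' e eq by auto
    next
      assume "\<exists>e. e \<in> G \<and> e \<notin> G'"
      then obtain e where e: "e \<in> G" "e \<notin> G'" by blast
      then obtain u v where "e = {u, v}" using G g unfolding graph_on_def by blast
      thus False using key[of G' G u v] G G' e eq by auto
    qed
  qed
  have fH: "finite H" using graph_on_sub[OF g] by (rule finite_subset) simp
  have cimg: "card ((\<lambda>G. f (sub k G)) ` Pow H) = 2 ^ card H"
    using card_image[OF inj] fH by (simp add: card_Pow)
  show ?thesis
  proof (rule ccontr)
    assume nt: "\<not> ?thesis"
    have lt: "length (f (sub k G)) < card H" if "G \<in> Pow H" for G
    proof -
      have "sub k G \<in> sub k ` Pow H" using that by blast
      with nt have "\<not> real (card H) \<le> real (length (f (sub k G)))" by blast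
      thus ?thesis by simp
    qed
    have sub: "(\<lambda>G. f (sub k G)) ` Pow H \<subseteq> {xs. length xs < card H}" using lt by blast
    have "card ((\<lambda>G. f (sub k G)) ` Pow H) \<le> card {xs :: bool list. length xs < card H}"
      by (rule card_mono[OF _ sub]) (use short_lists in blast)
    also have "\<dots> < 2 ^ card H" using short_lists by blast
    finally show False using cimg by simp
  qed
qed



theorem theorem1p5:
  fixes t :: nat and \<epsilon> :: real
  assumes "t \<ge> 2" and "\<epsilon> > 0"
  shows "\<exists>C c :: real. C > 0 \<and> c > 0 \<and>
    (\<exists>S :: nat set. infinite S \<and>
      (\<exists>(V :: nat \<Rightarrow> nat set) (K :: nat \<Rightarrow> nat set) (\<G> :: nat \<Rightarrow> nat set set set).
        (\<forall>\<eta> > 0. \<exists>k0. \<forall>k\<in>S. k \<ge> k0 \<longrightarrow> real k \<le> \<eta> * real (card (V k))) \<and>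
        (\<forall>k\<in>S.
          finite (V k) \<and> K k \<subseteq> V k \<and> card (K k) = k \<and>
          (\<forall>G\<in>\<G> k. graph_on (V k) G \<and> real (card G) \<le> C * real (card (V k))) \<and>
          (\<forall>(f :: nat set set \<Rightarrow> bool list) (dec :: bool list \<Rightarrow> nat \<Rightarrow> nat \<Rightarrow> ereal).
             ((\<forall>G\<in>\<G> k. \<forall>x\<in>K k. \<forall>x'\<in>K k.
                 hop_dist G x x' \<le> dec (f G) x x' \<and>
                 dec (f G) x x' \<le> ereal (real t - \<epsilon>) * hop_dist G x x')
              \<or>
              (\<forall>G\<in>\<G> k. \<forall>x\<in>K k. \<forall>x'\<in>K k.
                 hop_dist G x x' \<le> dec (f G) x x' \<and>
                 dec (f G) x x' \<le> hop_dist G x x' + ereal (2 * real t - 3)))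
             \<longrightarrow> (\<exists>G\<in>\<G> k. real (length (f G)) \<ge> c * real k powr (1 + 1 / (real t - 1)))))))"
proof -
  note t = assms(1) and eps = assms(2)
  define S where "S = {2 * (D + 1) ^ (t - 1) | D. D \<ge> (1::nat)}"
  define good where "good k H \<longleftrightarrow> graph_on {0..<k} H \<and> Pgood t H \<and>
      real k powr (1 + 1 / (real t - 1)) / 16 \<le> real (card H)" for k H
  define Hof where "Hof k = (SOME H. good k H)" for k
  have hgood: "good k (Hof k)" if "k \<in> S" for k
  proof -
    from that obtain D where D: "D \<ge> 1" "k = 2 * (D + 1) ^ (t - 1)" unfolding S_def by blast
    from exists_H[OF t D] obtain H where H: "graph_on {0..<k} H" "Pgood t H"
      "D * (D + 1) ^ (t - 1) \<le> 2 * card H" by blast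
    have "good k H" unfolding good_def using H size_bound[OF t D H(3)] by blast
    thus ?thesis unfolding Hof_def by (rule someI)
  qed
  have kpos: "k \<ge> 1" if "k \<in> S" for k using that unfolding S_def by auto
  have infS: "infinite S"
  proof (subst infinite_nat_iff_unbounded, intro allI)
    fix m :: nat
    have "m + 2 \<le> (m + 2) ^ (t - 1)" using t by (intro self_le_power) auto
    hence "m < 2 * ((m + 1) + 1) ^ (t - 1)" by simp
    moreover have "2 * ((m + 1) + 1) ^ (t - 1) \<in> S" unfolding S_def by (rule CollectI, rule exI[of _ "m + 1"]) simp
    ultimately show "\<exists>n>m. n \<in> S" by blast
  qed
  define V where "V k = {0..<k + k * k}" for k :: nat
  define K where "K k = {0..<k}" for k :: nat
  define \<G> where "\<G> k = sub k ` Pow (Hof k)" for k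
  show ?thesis
  proof (rule exI[of _ "2::real"], rule exI[of _ "1/16::real"], rule conjI, simp, rule conjI, simp,
         rule exI[of _ S], rule conjI, rule infS,
         rule exI[of _ V], rule exI[of _ K], rule exI[of _ \<G>], rule conjI)
    show "\<forall>\<eta> > 0. \<exists>k0. \<forall>k\<in>S. k \<ge> k0 \<longrightarrow> real k \<le> \<eta> * real (card (V k))"
    proof (intro allI impI)
    fix \<eta> :: real assume \<eta>: "\<eta> > 0"
    show "\<exists>k0. \<forall>k\<in>S. k0 \<le> k \<longrightarrow> real k \<le> \<eta> * real (card (V k))"
    proof (intro exI[of _ "nat \<lceil>1 / \<eta>\<rceil>"] ballI impI)
      fix k assume "k \<in> S" "nat \<lceil>1 / \<eta>\<rceil> \<le> k"
      hence "1 / \<eta> \<le> real k" by linarith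
      hence e1: "1 \<le> \<eta> * real k" using \<eta> by (simp add: field_simps)
      have "real k \<le> \<eta> * real k * real k" using mult_right_mono[OF e1, of "real k"] by simp
      also have "\<dots> \<le> \<eta> * real (k + k * k)" using \<eta> by (simp add: algebra_simps)
      finally show "real k \<le> \<eta> * real (card (V k))" unfolding V_def by simp
    qed
    qed
  next
    show "\<forall>k\<in>S.
          finite (V k) \<and> K k \<subseteq> V k \<and> card (K k) = k \<and>
          (\<forall>G\<in>\<G> k. graph_on (V k) G \<and> real (card G) \<le> 2 * real (card (V k))) \<and>
          (\<forall>(f :: nat set set \<Rightarrow> bool list) (dec :: bool list \<Rightarrow> nat \<Rightarrow> nat \<Rightarrow> ereal).
             ((\<forall>G\<in>\<G> k. \<forall>x\<in>K k. \<forall>x'\<in>K k.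
                 hop_dist G x x' \<le> dec (f G) x x' \<and>
                 dec (f G) x x' \<le> ereal (real t - \<epsilon>) * hop_dist G x x')
              \<or>
              (\<forall>G\<in>\<G> k. \<forall>x\<in>K k. \<forall>x'\<in>K k.
                 hop_dist G x x' \<le> dec (f G) x x' \<and>
                 dec (f G) x x' \<le> hop_dist G x x' + ereal (2 * real t - 3)))
             \<longrightarrow> (\<exists>G\<in>\<G> k. real (length (f G)) \<ge> 1/16 * real k powr (1 + 1 / (real t - 1))))"
    proof (rule ballI, intro conjI allI impI)
    fix k assume kS: "k \<in> S"
    have gk: "good k (Hof k)" by (rule hgood[OF kS])
    hence g: "graph_on {0..<k} (Hof k)" and P: "Pgood t (Hof k)"
      and sz: "real k powr (1 + 1 / (real t - 1)) / 16 \<le> real (card (Hof k))"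
      unfolding good_def by auto
    show "finite (V k)" unfolding V_def by simp
    show "K k \<subseteq> V k" unfolding V_def K_def by auto
    show "card (K k) = k" unfolding K_def by simp
    show "\<forall>G\<in>\<G> k. graph_on (V k) G \<and> real (card G) \<le> 2 * real (card (V k))"
    proof
      fix G assume "G \<in> \<G> k"
      then obtain G0 where G0: "G0 \<subseteq> Hof k" "G = sub k G0" unfolding \<G>_def by blast
      have g0: "graph_on {0..<k} G0" using g G0(1) unfolding graph_on_def by blast
      have "graph_on (V k) G" unfolding V_def G0(2) by (rule sub_graph[OF g0])
      moreover have "card G \<le> 2 * (k * k)" unfolding G0(2) by (rule sub_card[OF g0])
      hence "card G \<le> 2 * (k + k * k)" by simp
      hence "real (card G) \<le> 2 * real (k + k * k)" by linarith
      hence "real (card G) \<le> 2 * real (card (V k))" unfolding V_def by simp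
      ultimately show "graph_on (V k) G \<and> real (card G) \<le> 2 * real (card (V k))" by blast
    qed
    fix f :: "nat set set \<Rightarrow> bool list" and dec :: "bool list \<Rightarrow> nat \<Rightarrow> nat \<Rightarrow> ereal"
    assume hyp: "(\<forall>G\<in>\<G> k. \<forall>x\<in>K k. \<forall>x'\<in>K k.
                 hop_dist G x x' \<le> dec (f G) x x' \<and>
                 dec (f G) x x' \<le> ereal (real t - \<epsilon>) * hop_dist G x x')
              \<or>
              (\<forall>G\<in>\<G> k. \<forall>x\<in>K k. \<forall>x'\<in>K k.
                 hop_dist G x x' \<le> dec (f G) x x' \<and>
                 dec (f G) x x' \<le> hop_dist G x x' + ereal (2 * real t - 3))"
    from encode_lb[OF g P t eps hyp[unfolded \<G>_def K_def]]
    obtain G where G: "G \<in> sub k ` Pow (Hof k)" "real (card (Hof k)) \<le> real (length (f G))" by blast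
    have "1 / 16 * real k powr (1 + 1 / (real t - 1)) \<le> real (length (f G))" using sz G(2) by simp
    thus "\<exists>G\<in>\<G> k. 1 / 16 * real k powr (1 + 1 / (real t - 1)) \<le> real (length (f G))"
      using G(1) unfolding \<G>_def by blast
    qed
  qed
qed


end
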